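(* Suppose $p_{\max}\cdot d_{\max}<1$. Then there exist constants $R,\rho>0$ (depending only on $p_{\max}$ and $d_{\max}$) such that for any $L>0$, for every round $t$ of the adaptive seeding process (under any seeding rule and any prior history), the probability that the number of nodes newly activated in round $t$ exceeds $L$ is at most $Re^{-\rho L}$.
   Context: Setting: adaptive seeding on a finite directed graph $\mathcal G=(\mathcal V,\mathcal E)$ with influence probabilities $\bar w(e)$, one seed per round, each round's diffusion following the independent cascade model on the current graph (where arcs into nodes that have acted as non-seed activated nodes, i.e. intermediaries, in earlier rounds have been removed; independent-cascade coin flips are independent across arcs and rounds). $p_{\max}=\max_{e\in\mathcal E}\bar w(e)$ and $d_{\max}$ is the maximum out-degree of a node in $\mathcal G$. A node is newly activated in round $t$ if it is activated in round $t$ and was not activated in any earlier round. *)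

theory Defs
  imports "HOL-Probability.Probability"
begin

text \<open>A history of the adaptive seeding process is the list of completed rounds,
  each recorded as (seed of the round, set of nodes activated in that round).\<close>

type_synonym 'a history = "('a \<times> 'a set) list"

definition p_max :: "('a \<times> 'a) set \<Rightarrow> ('a \<times> 'a \<Rightarrow> real) \<Rightarrow> real" where
  "p_max E w = Max (insert 0 (w ` E))"

definition d_max :: "'a set \<Rightarrow> ('a \<times> 'a) set \<Rightarrow> nat" where
  "d_max V E = Max (insert 0 ((\<lambda>u. card {v. (u, v) \<in> E}) ` V))"

definition intermediaries :: "'a history \<Rightarrow> 'a set" where
  "intermediaries h = (\<Union>(s, A)\<in>set h. A - {s})"

definition previously_activated :: "'a history \<Rightarrow> 'a set" where
  "previously_activated h = (\<Union>(s, A)\<in>set h. A)"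

definition current_arcs :: "('a \<times> 'a) set \<Rightarrow> 'a history \<Rightarrow> ('a \<times> 'a) set" where
  "current_arcs E h = {(u, v) \<in> E. v \<notin> intermediaries h}"

definition coin_flips ::
  "('a \<times> 'a) set \<Rightarrow> ('a \<times> 'a \<Rightarrow> real) \<Rightarrow> 'a history \<Rightarrow> ('a \<times> 'a \<Rightarrow> bool) pmf" where
  "coin_flips E w h = Pi_pmf (current_arcs E h) False (\<lambda>e. bernoulli_pmf (w e))"

definition ic_activated :: "('a \<times> 'a) set \<Rightarrow> ('a \<times> 'a \<Rightarrow> bool) \<Rightarrow> 'a \<Rightarrow> 'a set" where
  "ic_activated F X s = {v. (s, v) \<in> {e \<in> F. X e}\<^sup>*}"

definition round_activated ::
  "('a \<times> 'a) set \<Rightarrow> ('a \<times> 'a \<Rightarrow> real) \<Rightarrow> 'a history \<Rightarrow> 'a \<Rightarrow> 'a set pmf" where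
  "round_activated E w h s =
     map_pmf (\<lambda>X. ic_activated (current_arcs E h) X s) (coin_flips E w h)"

definition newly_activated_count ::
  "('a \<times> 'a) set \<Rightarrow> ('a \<times> 'a \<Rightarrow> real) \<Rightarrow> ('a history \<Rightarrow> 'a pmf) \<Rightarrow> 'a history \<Rightarrow> nat pmf" where
  "newly_activated_count E w \<sigma> h =
     bind_pmf (\<sigma> h) (\<lambda>s. map_pmf (\<lambda>A. card (A - previously_activated h)) (round_activated E w h s))"

end

theory Submission imports Defs begin

definition reach :: "('a \<times> 'a) set \<Rightarrow> ('a \<times> 'a \<Rightarrow> bool) \<Rightarrow> 'a set \<Rightarrow> 'a set" where
  "reach F X S = {v. \<exists>x\<in>S. (x, v) \<in> {e\<in>F. X e}\<^sup>*}"

lemma reach_subset: "reach F X S \<subseteq> S \<union> snd ` F"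
proof
  fix v assume "v \<in> reach F X S"
  then obtain x where "x \<in> S" "(x, v) \<in> {e\<in>F. X e}\<^sup>*" by (auto simp: reach_def)
  from this(2) show "v \<in> S \<union> snd ` F"
    by (induction rule: rtrancl_induct) (use \<open>x \<in> S\<close> in force)+
qed

lemma finite_reach: "finite S \<Longrightarrow> finite F \<Longrightarrow> finite (reach F X S)"
  using reach_subset by (metis finite_Un finite_imageI finite_subset)

lemma reach_empty[simp]: "reach F X {} = {}" by (simp add: reach_def)

lemma reach_cong: "(\<And>e. e \<in> F \<Longrightarrow> X e = Y e) \<Longrightarrow> reach F X S = reach F Y S"
proof -
  assume "\<And>e. e \<in> F \<Longrightarrow> X e = Y e"
  then have "{e\<in>F. X e} = {e\<in>F. Y e}" by auto
  then show ?thesis by (simp add: reach_def)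
qed

lemma reach_split:
  assumes "s \<in> S"
  shows "reach F X S \<subseteq> insert s (reach (F - {e\<in>F. fst e = s}) X ((S - {s}) \<union> {v. (s, v) \<in> F \<and> X (s, v)}))"
    (is "_ \<subseteq> ?R")
proof
  fix v assume "v \<in> reach F X S"
  then obtain x where x: "x \<in> S" "(x, v) \<in> {e\<in>F. X e}\<^sup>*" by (auto simp: reach_def)
  from x(2) show "v \<in> ?R"
  proof (induction rule: rtrancl_induct)
    case base
    then show ?case using x(1) by (auto simp: reach_def)
  next
    case (step y v)
    show ?case
    proof (cases "y = s")
      case True
      then show ?thesis using step by (auto simp: reach_def)
    next
      case False
      with step.IH obtain x' where "x' \<in> (S - {s}) \<union> {v. (s, v) \<in> F \<and> X (s, v)}"
        "(x', y) \<in> {e\<in>F - {e\<in>F. fst e = s}. X e}\<^sup>*" by (auto simp: reach_def)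
      moreover have "(y, v) \<in> {e\<in>F - {e\<in>F. fst e = s}. X e}" using step(2) False by auto
      ultimately have "(x', v) \<in> {e\<in>F - {e\<in>F. fst e = s}. X e}\<^sup>*"
        by (meson rtrancl.rtrancl_into_rtrancl)
      then show ?thesis using \<open>x' \<in> _\<close> unfolding reach_def by blast
    qed
  qed
qed

lemma bern_int:
  assumes "0 \<le> a" "a \<le> 1" "c \<ge> 1"
  shows "(\<integral>\<^sup>+b. ennreal (if b then c else 1) \<partial>measure_pmf (bernoulli_pmf a)) = ennreal (1 + a * (c - 1))"
proof -
  have "(\<integral>\<^sup>+b. ennreal (if b then c else 1) \<partial>measure_pmf (bernoulli_pmf a))
     = (\<Sum>b\<in>UNIV. ennreal (if b then c else 1) * pmf (bernoulli_pmf a) b)"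
    by (rule nn_integral_measure_pmf_support) auto
  also have "\<dots> = ennreal c * ennreal a + ennreal (1 - a)"
    using assms by (simp add: UNIV_bool)
  also have "\<dots> = ennreal (1 + a * (c - 1))"
    using assms by (simp add: ennreal_mult[symmetric] ennreal_plus[symmetric] algebra_simps del: ennreal_plus)
  finally show ?thesis .
qed

abbreviation Q :: "('a \<times> 'a) set \<Rightarrow> ('a \<times> 'a \<Rightarrow> real) \<Rightarrow> ('a \<times> 'a \<Rightarrow> bool) pmf" where
  "Q F w \<equiv> Pi_pmf F False (\<lambda>e. bernoulli_pmf (w e))"

lemma card_true_prod:
  assumes "finite Os" "c \<ge> 0"
  shows "c ^ card {e\<in>Os. f e} = (\<Prod>e\<in>Os. if f e then c else 1)"
proof -
  have "(\<Prod>e\<in>Os. if f e then c else 1) = (\<Prod>e\<in>Os \<inter> {e. f e}. c) * (\<Prod>e\<in>Os \<inter> - {e. f e}. 1)"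
    using assms(1) by (rule prod.If_cases)
  also have "Os \<inter> {e. f e} = {e\<in>Os. f e}" by auto
  finally show ?thesis by simp
qed

lemma out_bound:
  assumes "finite Os" "c \<ge> 1" "\<forall>e\<in>Os. 0 \<le> w e \<and> w e \<le> 1 \<and> w e \<le> q" "card Os \<le> d" "q \<ge> 0"
  shows "(\<integral>\<^sup>+f. ennreal (c ^ card {e\<in>Os. f e}) \<partial>measure_pmf (Q Os w)) \<le> ennreal ((1 + q * (c - 1)) ^ d)"
proof -
  have "(\<integral>\<^sup>+f. ennreal (c ^ card {e\<in>Os. f e}) \<partial>measure_pmf (Q Os w))
      = (\<integral>\<^sup>+f. (\<Prod>e\<in>Os. ennreal (if f e then c else 1)) \<partial>measure_pmf (Q Os w))"
    using assms by (intro nn_integral_cong) (simp add: card_true_prod prod_ennreal)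
  also have "\<dots> = (\<Prod>e\<in>Os. \<integral>\<^sup>+b. ennreal (if b then c else 1) \<partial>measure_pmf (bernoulli_pmf (w e)))"
    using assms(1) by (rule nn_integral_prod_Pi_pmf)
  also have "\<dots> = (\<Prod>e\<in>Os. ennreal (1 + w e * (c - 1)))"
    using assms by (intro prod.cong refl bern_int) auto
  also have "\<dots> = ennreal (\<Prod>e\<in>Os. (1 + w e * (c - 1)))"
    using assms by (intro prod_ennreal) auto
  also have "(\<Prod>e\<in>Os. (1 + w e * (c - 1))) \<le> (\<Prod>e\<in>Os. (1 + q * (c - 1)))"
    using assms by (intro prod_mono) (auto intro: mult_right_mono)
  also have "\<dots> = (1 + q * (c - 1)) ^ card Os" by simp
  also have "\<dots> \<le> (1 + q * (c - 1)) ^ d"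
    using assms by (intro power_increasing) auto
  finally show ?thesis by (simp add: ennreal_leI)
qed

lemma finite_out: "finite F \<Longrightarrow> finite {v. (u, v) \<in> F}"
proof -
  assume "finite F"
  moreover have "{v. (u, v) \<in> F} \<subseteq> snd ` F" by force
  ultimately show ?thesis by (meson finite_imageI finite_subset)
qed

lemma main:
  fixes q z c :: real and d :: nat
  assumes c1: "c \<ge> 1" and z1: "z \<ge> 1" and q0: "q \<ge> 0" and key: "z * (1 + q * (c - 1)) ^ d \<le> c"
  shows "finite F \<Longrightarrow> (\<forall>e\<in>F. 0 \<le> w e \<and> w e \<le> 1 \<and> w e \<le> q) \<Longrightarrow> (\<forall>u. card {v. (u, v) \<in> F} \<le> d)
     \<Longrightarrow> finite S \<Longrightarrow>
     (\<integral>\<^sup>+X. ennreal (z ^ card (reach F X S)) \<partial>measure_pmf (Q F w)) \<le> ennreal (c ^ card S)"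
proof (induction "card F" arbitrary: F S rule: less_induct)
  case (less F)
  note IHF = less.hyps
  note Ffin = less.prems(1) and Fw = less.prems(2) and Fd = less.prems(3)
  show ?case using less.prems(4)
  proof (induction "card S" arbitrary: S rule: less_induct)
    case (less S)
    note IHS = less.hyps
    note Sfin = less.prems
    show ?case
    proof (cases "S = {}")
      case True
      then show ?thesis by simp
    next
      case False
      then obtain s where sS: "s \<in> S" by blast
      define Os where "Os = {e\<in>F. fst e = s}"
      define B where "B = F - Os"
      define S' where "S' f = (S - {s}) \<union> {v. (s, v) \<in> F \<and> f (s, v)}" for f :: "'a \<times> 'a \<Rightarrow> bool"
      define mg where "mg = (\<lambda>(f, g) x. if x \<in> Os then f x else (g x :: bool))"
      have Osfin: "finite Os" and Bfin: "finite B" using Ffin by (auto simp: Os_def B_def)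
      have split: "Q F w = map_pmf mg (pair_pmf (Q Os w) (Q B w))"
      proof -
        have "Os \<union> B = F" by (auto simp: Os_def B_def)
        moreover have "Os \<inter> B = {}" by (auto simp: B_def)
        ultimately show ?thesis
          using Pi_pmf_union[OF Osfin Bfin, of False "\<lambda>e. bernoulli_pmf (w e)"] by (simp add: mg_def)
      qed
      have S'fin: "finite (S' f)" for f
      proof -
        have "S' f \<subseteq> S \<union> {v. (s, v) \<in> F}" by (auto simp: S'_def)
        then show ?thesis using Sfin finite_out[OF Ffin] by (meson finite_Un finite_subset)
      qed
      have IH': "(\<integral>\<^sup>+g. ennreal (z ^ card (reach B g (S' f))) \<partial>measure_pmf (Q B w)) \<le> ennreal (c ^ card (S' f))" for f
      proof (cases "Os = {}")
        case True
        then have "B = F" by (simp add: B_def)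
        moreover have "S' f = S - {s}" using True by (auto simp: S'_def Os_def)
        moreover have "card (S - {s}) < card S" using sS Sfin by (meson card_Diff1_less)
        ultimately show ?thesis using IHS[of "S - {s}"] Sfin by simp
      next
        case False
        then obtain e0 where "e0 \<in> Os" by blast
        then have "B \<subset> F" by (auto simp: B_def Os_def)
        then have "card B < card F" using Ffin by (meson psubset_card_mono)
        moreover have "\<forall>e\<in>B. 0 \<le> w e \<and> w e \<le> 1 \<and> w e \<le> q" using Fw by (auto simp: B_def)
        moreover have "\<forall>u. card {v. (u, v) \<in> B} \<le> d"
        proof
          fix u
          have "card {v. (u, v) \<in> B} \<le> card {v. (u, v) \<in> F}"
            using finite_out[OF Ffin] by (intro card_mono) (auto simp: B_def)
          then show "card {v. (u, v) \<in> B} \<le> d" using Fd by (meson order_trans)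
        qed
        ultimately show ?thesis using IHF[OF _ Bfin] S'fin by blast
      qed
      have pw: "ennreal (z ^ card (reach F (mg (f, g)) S)) \<le> ennreal z * ennreal (z ^ card (reach B g (S' f)))" for f g
      proof -
        have "{v. (s, v) \<in> F \<and> mg (f, g) (s, v)} = {v. (s, v) \<in> F \<and> f (s, v)}"
          by (auto simp: mg_def Os_def)
        moreover have "reach B (mg (f, g)) X = reach B g X" for X
          by (rule reach_cong) (auto simp: mg_def B_def)
        ultimately have sub: "reach F (mg (f, g)) S \<subseteq> insert s (reach B g (S' f))"
          using reach_split[OF sS, of F "mg (f, g)"] by (simp add: B_def[symmetric] Os_def[symmetric] S'_def)
        have fin: "finite (reach B g (S' f))" using finite_reach[OF S'fin Bfin] .
        have "card (reach F (mg (f, g)) S) \<le> card (insert s (reach B g (S' f)))"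
          using sub fin by (intro card_mono) auto
        also have "\<dots> \<le> Suc (card (reach B g (S' f)))" using fin by (simp add: card_insert_if)
        finally have "z ^ card (reach F (mg (f, g)) S) \<le> z ^ Suc (card (reach B g (S' f)))"
          using z1 by (intro power_increasing) auto
        then show ?thesis using z1 by (simp add: ennreal_mult[symmetric] ennreal_leI)
      qed
      have cardS': "card (S' f) \<le> (card S - 1) + card {e\<in>Os. f e}" for f
      proof -
        have "card (S' f) \<le> card (S - {s}) + card {v. (s, v) \<in> F \<and> f (s, v)}"
          unfolding S'_def by (rule card_Un_le)
        moreover have "card {v. (s, v) \<in> F \<and> f (s, v)} \<le> card {e\<in>Os. f e}"
        proof -
          have "{v. (s, v) \<in> F \<and> f (s, v)} \<subseteq> snd ` {e\<in>Os. f e}" by (force simp: Os_def)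
          then have "card {v. (s, v) \<in> F \<and> f (s, v)} \<le> card (snd ` {e\<in>Os. f e})"
            using Osfin by (intro card_mono) auto
          also have "\<dots> \<le> card {e\<in>Os. f e}" by (rule card_image_le) (use Osfin in auto)
          finally show ?thesis .
        qed
        moreover have "card (S - {s}) = card S - 1" using sS Sfin by simp
        ultimately show ?thesis by linarith
      qed
      have cardOs: "card Os \<le> d"
      proof -
        have "Os = (\<lambda>v. (s, v)) ` {v. (s, v) \<in> F}" by (force simp: Os_def)
        then have "card Os = card {v. (s, v) \<in> F}" by (simp add: card_image inj_on_def)
        then show ?thesis using Fd by simp
      qed
      have "(\<integral>\<^sup>+X. ennreal (z ^ card (reach F X S)) \<partial>measure_pmf (Q F w))
          = (\<integral>\<^sup>+f. \<integral>\<^sup>+g. ennreal (z ^ card (reach F (mg (f, g)) S)) \<partial>measure_pmf (Q B w) \<partial>measure_pmf (Q Os w))"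
        by (simp add: split nn_integral_pair_pmf')
      also have "\<dots> \<le> (\<integral>\<^sup>+f. ennreal z * \<integral>\<^sup>+g. ennreal (z ^ card (reach B g (S' f))) \<partial>measure_pmf (Q B w) \<partial>measure_pmf (Q Os w))"
        by (intro nn_integral_mono) (simp add: pw nn_integral_cmult[symmetric] nn_integral_mono)
      also have "\<dots> \<le> (\<integral>\<^sup>+f. ennreal z * ennreal (c ^ card (S' f)) \<partial>measure_pmf (Q Os w))"
        by (intro nn_integral_mono mult_left_mono IH') auto
      also have "\<dots> \<le> (\<integral>\<^sup>+f. ennreal (z * c ^ (card S - 1)) * ennreal (c ^ card {e\<in>Os. f e}) \<partial>measure_pmf (Q Os w))"
      proof (intro nn_integral_mono)
        fix f
        have "c ^ card (S' f) \<le> c ^ ((card S - 1) + card {e\<in>Os. f e})"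
          using c1 cardS' by (intro power_increasing) auto
        then have "z * c ^ card (S' f) \<le> z * c ^ (card S - 1) * c ^ card {e\<in>Os. f e}"
          using z1 by (simp add: power_add mult.assoc)
        then show "ennreal z * ennreal (c ^ card (S' f)) \<le> ennreal (z * c ^ (card S - 1)) * ennreal (c ^ card {e\<in>Os. f e})"
          using z1 c1 by (simp add: ennreal_mult[symmetric] ennreal_leI)
      qed
      also have "\<dots> = ennreal (z * c ^ (card S - 1)) * (\<integral>\<^sup>+f. ennreal (c ^ card {e\<in>Os. f e}) \<partial>measure_pmf (Q Os w))"
        by (rule nn_integral_cmult) auto
      also have "\<dots> \<le> ennreal (z * c ^ (card S - 1)) * ennreal ((1 + q * (c - 1)) ^ d)"
        using Fw cardOs by (intro mult_left_mono out_bound[OF Osfin c1] q0) (auto simp: Os_def)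
      also have "\<dots> = ennreal (z * (1 + q * (c - 1)) ^ d * c ^ (card S - 1))"
        using z1 c1 q0 by (simp add: ennreal_mult[symmetric] mult_ac)
      also have "\<dots> \<le> ennreal (c * c ^ (card S - 1))"
        using key c1 by (intro ennreal_leI mult_right_mono) auto
      also have "c * c ^ (card S - 1) = c ^ card S"
        using sS Sfin by (metis card_gt_0_iff emptyE power_eq_if neq0_conv)
      finally show ?thesis .
    qed
  qed
qed

lemma tail_one:
  fixes q z c :: real and d :: nat
  assumes c1: "c \<ge> 1" and z1: "z > 1" and q0: "q \<ge> 0" and key: "z * (1 + q * (c - 1)) ^ d \<le> c"
    and F: "finite F" "\<forall>e\<in>F. 0 \<le> w e \<and> w e \<le> 1 \<and> w e \<le> q" "\<forall>u. card {v. (u, v) \<in> F} \<le> d"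
  shows "emeasure (measure_pmf (Q F w)) {X. L < real (card (reach F X {s}))} \<le> ennreal (c * exp (- ln z * L))"
proof -
  have zL: "z powr L > 0" using z1 by simp
  have "emeasure (measure_pmf (Q F w)) {X. L < real (card (reach F X {s}))}
      = (\<integral>\<^sup>+X. indicator {X. L < real (card (reach F X {s}))} X \<partial>measure_pmf (Q F w))"
    by (rule nn_integral_indicator[symmetric]) simp
  also have "\<dots> \<le> (\<integral>\<^sup>+X. ennreal (1 / z powr L) * ennreal (z ^ card (reach F X {s})) \<partial>measure_pmf (Q F w))"
  proof (intro nn_integral_mono)
    fix X
    show "indicator {X. L < real (card (reach F X {s}))} X \<le> ennreal (1 / z powr L) * ennreal (z ^ card (reach F X {s}))"
    proof (cases "L < real (card (reach F X {s}))")
      case True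
      have "z powr L \<le> z powr real (card (reach F X {s}))"
        using z1 True by (intro powr_mono) auto
      also have "\<dots> = z ^ card (reach F X {s})" using z1 by (simp add: powr_realpow)
      finally have "1 \<le> (1 / z powr L) * z ^ card (reach F X {s})" using zL by (simp add: field_simps)
      then show ?thesis using True zL z1 by (simp add: ennreal_mult[symmetric] ennreal_leI del: ennreal_1 add: ennreal_1[symmetric])
    qed simp
  qed
  also have "\<dots> = ennreal (1 / z powr L) * (\<integral>\<^sup>+X. ennreal (z ^ card (reach F X {s})) \<partial>measure_pmf (Q F w))"
    by (rule nn_integral_cmult) auto
  also have "\<dots> \<le> ennreal (1 / z powr L) * ennreal (c ^ card {s})"
    using main[OF c1 _ q0 key F, of "{s}"] z1 by (intro mult_left_mono) auto
  also have "\<dots> = ennreal (c * exp (- ln z * L))"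
    using z1 c1 by (simp add: ennreal_mult[symmetric] powr_def exp_minus field_simps)
  finally show ?thesis .
qed

lemma consts_exist:
  fixes p :: real and d :: nat
  assumes "p * real d < 1"
  shows "\<exists>z c. z > 1 \<and> c \<ge> 1 \<and> z * (1 + max 0 p * (c - 1)) ^ d \<le> c"
proof -
  define q where "q = max 0 p"
  have q0: "q \<ge> 0" by (simp add: q_def)
  define x where "x = q * real d"
  have x0: "0 \<le> x" and x1: "x < 1" using assms q0 by (auto simp: x_def q_def max_def)
  define \<epsilon> where "\<epsilon> = (1 - x) / 2"
  have e0: "0 < \<epsilon>" "\<epsilon> \<le> 1/2" using x0 x1 by (auto simp: \<epsilon>_def)
  have "(1 + q * \<epsilon>) ^ d \<le> exp (q * \<epsilon>) ^ d"
    using q0 e0 by (intro power_mono) (auto simp: add.commute exp_ge_add_one_self)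
  also have "\<dots> = exp (x * \<epsilon>)" by (simp add: x_def exp_of_nat_mult[symmetric] mult_ac)
  also have "\<dots> \<le> 1 + x * \<epsilon> + (x * \<epsilon>)\<^sup>2"
    using x0 x1 e0 by (intro exp_bound) (auto intro: mult_le_one)
  also have "\<dots> < 1 + \<epsilon>"
  proof -
    have "x + x\<^sup>2 * \<epsilon> < 1"
    proof -
      have "x\<^sup>2 * \<epsilon> = x\<^sup>2 * (1 - x) / 2" by (simp add: \<epsilon>_def)
      also have "\<dots> < 1 - x"
      proof -
        have "x\<^sup>2 \<le> 1" using x0 x1 by (intro power_le_one) auto
        then have "x\<^sup>2 * (1 - x) \<le> 1 * (1 - x)" using x1 by (intro mult_right_mono) auto
        then show ?thesis using x1 by (simp add: field_simps)
      qed
      finally show ?thesis by simp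
    qed
    then have "(x + x\<^sup>2 * \<epsilon>) * \<epsilon> < 1 * \<epsilon>" using e0
      by (intro mult_strict_right_mono) auto
    then have "x * \<epsilon> + x\<^sup>2 * \<epsilon> * \<epsilon> < \<epsilon>" by (simp add: algebra_simps)
    then show ?thesis by (simp add: power2_eq_square mult_ac)
  qed
  finally have lt: "(1 + q * \<epsilon>) ^ d < 1 + \<epsilon>" .
  have pos: "(1 + q * \<epsilon>) ^ d > 0" using q0 e0 by (intro zero_less_power) (simp add: add_pos_nonneg)
  define z where "z = (1 + \<epsilon>) / (1 + q * \<epsilon>) ^ d"
  have "z > 1" using lt pos by (simp add: z_def)
  moreover have "z * (1 + q * ((1 + \<epsilon>) - 1)) ^ d \<le> 1 + \<epsilon>" using pos e0 by (simp add: z_def)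
  ultimately show ?thesis using e0 unfolding q_def by (intro exI[of _ z] exI[of _ "1 + \<epsilon>"]) auto
qed


theorem lemma3:
  fixes p :: real and d :: nat
  assumes "p * real d < 1"
  shows "\<exists>R \<rho>. R > 0 \<and> \<rho> > 0 \<and>
    (\<forall>(V :: 'a set) E w. finite V \<longrightarrow> E \<subseteq> V \<times> V \<longrightarrow> (\<forall>e\<in>E. 0 \<le> w e \<and> w e \<le> 1) \<longrightarrow>
       p_max E w = p \<longrightarrow> d_max V E = d \<longrightarrow>
       (\<forall>L > 0. \<forall>\<sigma> h. (\<forall>h'. set_pmf (\<sigma> h') \<subseteq> V) \<longrightarrow>
          measure_pmf.prob (newly_activated_count E w \<sigma> h) {n. real n > L}
            \<le> R * exp (- \<rho> * L)))"
proof -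
  obtain z c where z1: "z > 1" and c1: "c \<ge> 1" and key: "z * (1 + max 0 p * (c - 1)) ^ d \<le> c"
    using consts_exist[OF assms] by blast
  define q where "q = max 0 p"
  have q0: "q \<ge> 0" by (simp add: q_def)
  have key': "z * (1 + q * (c - 1)) ^ d \<le> c" using key by (simp add: q_def)
  show ?thesis
  proof (rule exI[of _ c], rule exI[of _ "ln z"], intro conjI allI impI)
    show "c > 0" using c1 by simp
    show "ln z > 0" using z1 by simp
    fix V :: "'a set" and E :: "('a \<times> 'a) set" and w :: "'a \<times> 'a \<Rightarrow> real" and L :: real
      and \<sigma> :: "'a history \<Rightarrow> 'a pmf" and h :: "'a history"
    assume V: "finite V" and EV: "E \<subseteq> V \<times> V" and wE: "\<forall>e\<in>E. 0 \<le> w e \<and> w e \<le> 1"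
      and pm: "p_max E w = p" and dm: "d_max V E = d" and L0: "L > 0"
      and \<sigma>V: "\<forall>h'. set_pmf (\<sigma> h') \<subseteq> V"
    define F where "F = current_arcs E h"
    have Efin: "finite E" using V EV by (meson finite_SigmaI finite_subset)
    have FE: "F \<subseteq> E" by (auto simp: F_def current_arcs_def)
    have Ffin: "finite F" using Efin FE by (rule finite_subset[rotated])
    have Fw: "\<forall>e\<in>F. 0 \<le> w e \<and> w e \<le> 1 \<and> w e \<le> q"
    proof
      fix e assume "e \<in> F"
      then have eE: "e \<in> E" using FE by auto
      have "w e \<le> Max (insert 0 (w ` E))" using Efin eE by (intro Max_ge) auto
      then have "w e \<le> p" using pm by (simp add: p_max_def)
      then show "0 \<le> w e \<and> w e \<le> 1 \<and> w e \<le> q" using wE eE by (auto simp: q_def)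
    qed
    have Fd: "\<forall>u. card {v. (u, v) \<in> F} \<le> d"
    proof
      fix u
      show "card {v. (u, v) \<in> F} \<le> d"
      proof (cases "u \<in> V")
        case True
        have "card {v. (u, v) \<in> F} \<le> card {v. (u, v) \<in> E}"
          using finite_out[OF Efin] FE by (intro card_mono) auto
        also have "\<dots> \<le> Max (insert 0 ((\<lambda>u. card {v. (u, v) \<in> E}) ` V))"
          using V True by (intro Max_ge) auto
        finally show ?thesis using dm by (simp add: d_max_def)
      next
        case False
        then have "{v. (u, v) \<in> F} = {}" using FE EV by auto
        then show ?thesis by simp
      qed
    qed
    have each: "emeasure (measure_pmf (map_pmf (\<lambda>A. card (A - previously_activated h)) (round_activated E w h s))) {n. real n > L}
        \<le> ennreal (c * exp (- ln z * L))" for s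
    proof -
      have ra: "round_activated E w h s = map_pmf (\<lambda>X. reach F X {s}) (Q F w)"
        by (simp add: round_activated_def coin_flips_def ic_activated_def reach_def F_def)
      have "emeasure (measure_pmf (map_pmf (\<lambda>A. card (A - previously_activated h)) (round_activated E w h s))) {n. real n > L}
          = emeasure (measure_pmf (Q F w)) {X. L < real (card (reach F X {s} - previously_activated h))}"
        by (simp add: ra vimage_def)
      also have "\<dots> \<le> emeasure (measure_pmf (Q F w)) {X. L < real (card (reach F X {s}))}"
      proof (intro emeasure_mono)
        show "{X. L < real (card (reach F X {s} - previously_activated h))} \<subseteq> {X. L < real (card (reach F X {s}))}"
        proof
          fix X assume "X \<in> {X. L < real (card (reach F X {s} - previously_activated h))}"
          moreover have "card (reach F X {s} - previously_activated h) \<le> card (reach F X {s})"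
            using finite_reach[OF _ Ffin, of "{s}" X] by (intro card_mono) auto
          ultimately show "X \<in> {X. L < real (card (reach F X {s}))}" by auto
        qed
      qed simp
      also have "\<dots> \<le> ennreal (c * exp (- ln z * L))"
        by (rule tail_one[OF c1 z1 q0 key' Ffin Fw Fd])
      finally show ?thesis .
    qed
    have "emeasure (measure_pmf (newly_activated_count E w \<sigma> h)) {n. real n > L}
        = (\<integral>\<^sup>+s. emeasure (measure_pmf (map_pmf (\<lambda>A. card (A - previously_activated h)) (round_activated E w h s))) {n. real n > L} \<partial>measure_pmf (\<sigma> h))"
      by (simp only: newly_activated_count_def emeasure_bind_pmf)
    also have "\<dots> \<le> (\<integral>\<^sup>+s. ennreal (c * exp (- ln z * L)) \<partial>measure_pmf (\<sigma> h))"
      by (intro nn_integral_mono each)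
    also have "\<dots> = ennreal (c * exp (- ln z * L))" by simp
    finally have "ennreal (measure_pmf.prob (newly_activated_count E w \<sigma> h) {n. real n > L}) \<le> ennreal (c * exp (- ln z * L))"
      by (simp add: measure_pmf.emeasure_eq_measure)
    then show "measure_pmf.prob (newly_activated_count E w \<sigma> h) {n. real n > L} \<le> c * exp (- ln z * L)"
      using c1 by (simp add: ennreal_le_iff)
  qed
qed

end
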